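(* In any finite discounted stochastic game and for any $\bm{\Lambda}=(\Lambda^1,\dots,\Lambda^N)\in\mathbb{R}^N$: (i) for every $\bm{\pi}\in\bm{\Pi}$, $\bm{\pi}\in\bm{\Pi}_{\rm eq}$ if and only if $\{\bm{\pi}\}$ is a minimal cumber set; (ii) for every $\bm{\pi}\in\bm{\Pi}\setminus\bm{\Pi}^{\bm{\Lambda}}_{\rm cumber}$ there is a multi-DM strict best reply path starting at $\bm{\pi}$ and ending in $\bm{\Pi}^{\bm{\Lambda}}_{\rm cumber}$.
   Context: Game setup: finite discounted stochastic game with $N$ decision makers, finite state set $\mathbb{X}$, finite action sets $\mathbb{U}^i$, discount factors $\beta^i\in(0,1)$, costs $c^i:\mathbb{X}\times\mathbb{U}\to\mathbb{R}$, transition kernel $P$. $\Pi^i$ = set of maps $\mathbb{X}\to\mathbb{U}^i$, $\bm{\Pi}=\times_i\Pi^i$; $J^i_x(\bm{\pi})=E[\sum_{t\ge0}(\beta^i)^tc^i(x_t,\bm{\pi}(x_t))\mid x_0=x]$ with $x_{t+1}\sim P(\cdot\mid x_t,\bm{\pi}(x_t))$; $\tilde S^i(\bm{\pi})=\sum_{x\in\mathbb{X}}J^i_x(\bm{\pi})$. Best reply, strict best reply with respect to $\bm{\pi}$ (a best reply to $\bm{\pi}^{-i}$ with strictly smaller $J^i_x$ than $\pi^i$ at some $x$), $\bm{\Pi}_{\rm eq}$ (all DMs best-replying), multi-DM strict best reply path (consecutive elements differ, and every DM that changes switches to a strict best reply with respect to the previous joint policy), $\widetilde{BR}(\bm{\pi})$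 and cumber sets are as follows: $\widetilde{BR}(\bm{\pi})=\{\tilde{\bm{\pi}}:\forall i,\ \tilde\pi^i\ne\pi^i\Rightarrow\tilde\pi^i$ strict best reply with respect to $\bm{\pi}\}$; a nonempty $\tilde{\bm{\Pi}}$ is a cumber set if $\bm{\pi}\in\tilde{\bm{\Pi}}\Rightarrow\widetilde{BR}(\bm{\pi})\subseteq\tilde{\bm{\Pi}}$, minimal if it properly contains no cumber set. Further, $\widetilde{BR}^{\bm{\Lambda}}(\bm{\pi})=\{\tilde{\bm{\pi}}\in\bm{\Pi}:\forall i,\ \tilde\pi^i\ne\pi^i\Rightarrow(\tilde S^i(\bm{\pi})>\Lambda^i$ and $\tilde\pi^i$ is a strict best reply with respect to $\bm{\pi})\}$; a nonempty $\tilde{\bm{\Pi}}\subseteq\bm{\Pi}$ is a $\bm{\Lambda}$-cumber set if $\bm{\pi}\in\tilde{\bm{\Pi}}\Rightarrow\widetilde{BR}^{\bm{\Lambda}}(\bm{\pi})\subseteq\tilde{\bm{\Pi}}$, minimal if it properly contains no other $\bm{\Lambda}$-cumber set; $\bm{\Pi}^{\bm{\Lambda}}_{\rm cumber}$ is the union of all minimal $\bm{\Lambda}$-cumber sets. *)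

theory Defs
  imports "HOL-Analysis.Analysis"
begin

text \<open>Finite discounted stochastic game.
  'i : decision makers (finite type), 'x : states (finite type), 'a : ambient action type;
  A i : finite action set of DM i; a joint action is a map u :: 'i \<Rightarrow> 'a with u i \<in> A i.
  beta i : discount factor; c i x u : cost of DM i; P x u y : transition probability.
  A joint (stationary deterministic) policy is sg :: 'i \<Rightarrow> 'x \<Rightarrow> 'a, sg i being the policy of DM i.\<close>

definition joint_actions :: "('i \<Rightarrow> 'a set) \<Rightarrow> ('i \<Rightarrow> 'a) set" where
  "joint_actions A = {u. \<forall>i. u i \<in> A i}"

definition is_game ::
  "('i::finite \<Rightarrow> 'a::finite set) \<Rightarrow> ('i \<Rightarrow> real) \<Rightarrow> ('x::finite \<Rightarrow> ('i \<Rightarrow> 'a) \<Rightarrow> 'x \<Rightarrow> real) \<Rightarrow> bool" where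
  "is_game A beta P \<longleftrightarrow>
     (\<forall>i. A i \<noteq> {}) \<and> (\<forall>i. 0 < beta i \<and> beta i < 1) \<and>
     (\<forall>x. \<forall>u\<in>joint_actions A. (\<forall>y. 0 \<le> P x u y) \<and> (\<Sum>y\<in>UNIV. P x u y) = 1)"

definition Pol :: "('i \<Rightarrow> 'a set) \<Rightarrow> 'i \<Rightarrow> ('x \<Rightarrow> 'a) set" where
  "Pol A i = {p. \<forall>x. p x \<in> A i}"

definition JPol :: "('i \<Rightarrow> 'a set) \<Rightarrow> ('i \<Rightarrow> 'x \<Rightarrow> 'a) set" where
  "JPol A = {sg. \<forall>i. sg i \<in> Pol A i}"

definition jact :: "('i \<Rightarrow> 'x \<Rightarrow> 'a) \<Rightarrow> 'x \<Rightarrow> ('i \<Rightarrow> 'a)" where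
  "jact sg x = (\<lambda>j. sg j x)"

fun tprob :: "('x::finite \<Rightarrow> ('i \<Rightarrow> 'a) \<Rightarrow> 'x \<Rightarrow> real) \<Rightarrow> ('i \<Rightarrow> 'x \<Rightarrow> 'a) \<Rightarrow> nat \<Rightarrow> 'x \<Rightarrow> 'x \<Rightarrow> real" where
  "tprob P sg 0 x y = (if x = y then 1 else 0)"
| "tprob P sg (Suc t) x y = (\<Sum>z\<in>UNIV. tprob P sg t x z * P z (jact sg z) y)"

definition Jc ::
  "('i \<Rightarrow> real) \<Rightarrow> ('i \<Rightarrow> 'x \<Rightarrow> ('i \<Rightarrow> 'a) \<Rightarrow> real) \<Rightarrow> ('x::finite \<Rightarrow> ('i \<Rightarrow> 'a) \<Rightarrow> 'x \<Rightarrow> real)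
     \<Rightarrow> 'i \<Rightarrow> ('i \<Rightarrow> 'x \<Rightarrow> 'a) \<Rightarrow> 'x \<Rightarrow> real" where
  "Jc beta c P i sg x = (\<Sum>t. beta i ^ t * (\<Sum>y\<in>UNIV. tprob P sg t x y * c i y (jact sg y)))"

definition Stilde ::
  "('i \<Rightarrow> real) \<Rightarrow> ('i \<Rightarrow> 'x \<Rightarrow> ('i \<Rightarrow> 'a) \<Rightarrow> real) \<Rightarrow> ('x::finite \<Rightarrow> ('i \<Rightarrow> 'a) \<Rightarrow> 'x \<Rightarrow> real)
     \<Rightarrow> 'i \<Rightarrow> ('i \<Rightarrow> 'x \<Rightarrow> 'a) \<Rightarrow> real" where
  "Stilde beta c P i sg = (\<Sum>x\<in>UNIV. Jc beta c P i sg x)"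

definition best_reply where
  "best_reply A beta c P i sg p \<longleftrightarrow> p \<in> Pol A i \<and>
     (\<forall>q\<in>Pol A i. \<forall>x. Jc beta c P i (sg(i := p)) x \<le> Jc beta c P i (sg(i := q)) x)"

definition strict_best_reply where
  "strict_best_reply A beta c P i sg p \<longleftrightarrow> best_reply A beta c P i sg p \<and>
     (\<exists>x. Jc beta c P i (sg(i := p)) x < Jc beta c P i sg x)"

definition Peq where
  "Peq A beta c P = {sg \<in> JPol A. \<forall>i. best_reply A beta c P i sg (sg i)}"

definition BRt where
  "BRt A beta c P sg = {sg' \<in> JPol A. \<forall>i. sg' i \<noteq> sg i \<longrightarrow> strict_best_reply A beta c P i sg (sg' i)}"

definition cumber where
  "cumber A beta c P T \<longleftrightarrow> T \<noteq> {} \<and> T \<subseteq> JPol A \<and> (\<forall>sg\<in>T. BRt A beta c P sg \<subseteq> T)"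

definition min_cumber where
  "min_cumber A beta c P T \<longleftrightarrow> cumber A beta c P T \<and> \<not> (\<exists>T'. T' \<subset> T \<and> cumber A beta c P T')"

definition BRt_L where
  "BRt_L A beta c P L sg = {sg' \<in> JPol A. \<forall>i. sg' i \<noteq> sg i \<longrightarrow>
      (Stilde beta c P i sg > L i \<and> strict_best_reply A beta c P i sg (sg' i))}"

definition L_cumber where
  "L_cumber A beta c P L T \<longleftrightarrow> T \<noteq> {} \<and> T \<subseteq> JPol A \<and> (\<forall>sg\<in>T. BRt_L A beta c P L sg \<subseteq> T)"

definition min_L_cumber where
  "min_L_cumber A beta c P L T \<longleftrightarrow> L_cumber A beta c P L T \<and> \<not> (\<exists>T'. T' \<subset> T \<and> L_cumber A beta c P L T')"

definition Pcumber_L where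
  "Pcumber_L A beta c P L = \<Union>{T. min_L_cumber A beta c P L T}"

definition sbr_path where
  "sbr_path A beta c P ps \<longleftrightarrow> ps \<noteq> [] \<and> set ps \<subseteq> JPol A \<and>
     (\<forall>k. Suc k < length ps \<longrightarrow> ps ! Suc k \<noteq> ps ! k \<and> ps ! Suc k \<in> BRt A beta c P (ps ! k))"

end

theory Submission
  imports Defs
begin

definition stoch :: "('x::finite \<Rightarrow> ('i \<Rightarrow> 'a) \<Rightarrow> 'x \<Rightarrow> real) \<Rightarrow> ('i \<Rightarrow> 'x \<Rightarrow> 'a) \<Rightarrow> bool" where
  "stoch P sg \<longleftrightarrow> (\<forall>z. (\<forall>y. 0 \<le> P z (jact sg z) y) \<and> (\<Sum>y\<in>UNIV. P z (jact sg z) y) = 1)"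

lemma tprob_nonneg: "stoch P sg \<Longrightarrow> 0 \<le> tprob P sg t x y"
  by (induction t arbitrary: y) (auto simp: stoch_def intro!: sum_nonneg)

lemma tprob_sum: "stoch P sg \<Longrightarrow> (\<Sum>y\<in>UNIV. tprob P sg t x y) = 1"
proof (induction t)
  case 0 then show ?case by simp
next
  case (Suc t)
  have "(\<Sum>y\<in>UNIV. tprob P sg (Suc t) x y)
      = (\<Sum>z\<in>UNIV. tprob P sg t x z * (\<Sum>y\<in>UNIV. P z (jact sg z) y))"
    by (simp add: sum_distrib_left) (rule sum.swap)
  also have "\<dots> = (\<Sum>z\<in>UNIV. tprob P sg t x z)" using Suc.prems by (simp add: stoch_def)
  finally show ?case using Suc by simp
qed

lemma tprob_le1: "stoch P sg \<Longrightarrow> tprob P sg t x y \<le> 1"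
proof -
  assume s: "stoch P sg"
  have "tprob P sg t x y \<le> (\<Sum>y\<in>UNIV. tprob P sg t x y)"
    by (rule member_le_sum) (auto simp: tprob_nonneg[OF s])
  then show ?thesis using tprob_sum[OF s] by simp
qed

lemma delta_r: "(\<Sum>z\<in>UNIV. (f::'x::finite\<Rightarrow>real) z * (if z = y then 1 else 0)) = f y"
proof -
  have "(\<Sum>z\<in>UNIV. f z * (if z = y then 1 else 0)) = (\<Sum>z\<in>UNIV. if y = z then f z else 0)"
    by (rule sum.cong) auto
  then show ?thesis by simp
qed

lemma delta_l: "(\<Sum>z\<in>UNIV. (if x = z then 1 else 0) * (f::'x::finite\<Rightarrow>real) z) = f x"
proof -
  have "(\<Sum>z\<in>UNIV. (if x = z then 1 else 0) * f z) = (\<Sum>z\<in>UNIV. if x = z then f z else 0)"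
    by (rule sum.cong) auto
  then show ?thesis by simp
qed

lemma tprob_left: "tprob P sg (Suc t) x y = (\<Sum>z\<in>UNIV. P x (jact sg x) z * tprob P sg t z y)"
proof (induction t arbitrary: y)
  case 0 then show ?case by (simp add: delta_l delta_r)
next
  case (Suc t)
  have "tprob P sg (Suc (Suc t)) x y = (\<Sum>z\<in>UNIV. (\<Sum>w\<in>UNIV. P x (jact sg x) w * tprob P sg t w z) * P z (jact sg z) y)"
    using Suc by simp
  also have "\<dots> = (\<Sum>w\<in>UNIV. P x (jact sg x) w * (\<Sum>z\<in>UNIV. tprob P sg t w z * P z (jact sg z) y))"
    by (simp add: sum_distrib_left sum_distrib_right mult.assoc) (rule sum.swap)
  finally show ?case by simp
qed

lemma bellman:
  fixes r :: "'x::finite \<Rightarrow> real"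
  assumes s: "stoch P sg" and b: "\<bar>b\<bar> < 1"
  shows "summable (\<lambda>t. b^t * (\<Sum>y\<in>UNIV. tprob P sg t x y * r y))"
    and "(\<Sum>t. b^t * (\<Sum>y\<in>UNIV. tprob P sg t x y * r y))
       = r x + b * (\<Sum>z\<in>UNIV. P x (jact sg x) z * (\<Sum>t. b^t * (\<Sum>y\<in>UNIV. tprob P sg t z y * r y)))"
proof -
  define f where "f t x = (\<Sum>y\<in>UNIV. tprob P sg t x y * r y)" for t x
  define B where "B = (\<Sum>y\<in>UNIV. \<bar>r y\<bar>)"
  have fb: "\<bar>f t x\<bar> \<le> B" for t x
  proof -
    have "\<bar>f t x\<bar> \<le> (\<Sum>y\<in>UNIV. \<bar>tprob P sg t x y * r y\<bar>)" unfolding f_def by (rule sum_abs)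
    also have "\<dots> \<le> B" unfolding B_def
      by (rule sum_mono) (auto simp: abs_mult tprob_nonneg[OF s] tprob_le1[OF s] intro!: mult_left_le_one_le)
    finally show ?thesis .
  qed
  have sm: "summable (\<lambda>t. b^t * f t x)" for x
  proof (rule summable_comparison_test)
    show "\<exists>N. \<forall>n\<ge>N. norm (b^n * f n x) \<le> B * \<bar>b\<bar>^n"
      using fb by (auto simp: abs_mult power_abs mult.commute[of "\<bar>b\<bar>^_"] intro!: mult_right_mono)
    show "summable (\<lambda>n. B * \<bar>b\<bar>^n)" using b by (intro summable_mult summable_geometric) simp
  qed
  then show "summable (\<lambda>t. b^t * (\<Sum>y\<in>UNIV. tprob P sg t x y * r y))" unfolding f_def .
  have fS: "f (Suc t) x = (\<Sum>z\<in>UNIV. P x (jact sg x) z * f t z)" for t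
    unfolding f_def tprob_left
    by (simp add: sum_distrib_left sum_distrib_right mult.assoc) (rule sum.swap)
  have "(\<Sum>t. b^t * f t x) = (\<Sum>t. b^(Suc t) * f (Suc t) x) + b^0 * f 0 x"
    using suminf_split_head[OF sm[of x]] by simp
  also have "b^0 * f 0 x = r x" by (simp add: f_def delta_l)
  also have "(\<Sum>t. b^(Suc t) * f (Suc t) x) = (\<Sum>t. b * (\<Sum>z\<in>UNIV. P x (jact sg x) z * (b^t * f t z)))"
    by (simp add: fS sum_distrib_left mult_ac)
  also have "\<dots> = b * (\<Sum>t. (\<Sum>z\<in>UNIV. P x (jact sg x) z * (b^t * f t z)))"
    by (rule suminf_mult) (intro summable_sum summable_mult sm)
  also have "(\<Sum>t. (\<Sum>z\<in>UNIV. P x (jact sg x) z * (b^t * f t z))) = (\<Sum>z\<in>UNIV. (\<Sum>t. P x (jact sg x) z * (b^t * f t z)))"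
    by (rule suminf_sum) (intro summable_mult sm)
  also have "\<dots> = (\<Sum>z\<in>UNIV. P x (jact sg x) z * (\<Sum>t. b^t * f t z))"
    by (intro sum.cong refl) (simp add: suminf_mult sm)
  finally show "(\<Sum>t. b^t * (\<Sum>y\<in>UNIV. tprob P sg t x y * r y))
       = r x + b * (\<Sum>z\<in>UNIV. P x (jact sg x) z * (\<Sum>t. b^t * (\<Sum>y\<in>UNIV. tprob P sg t z y * r y)))"
    unfolding f_def by simp
qed


lemma stoch_JPol: "is_game A beta P \<Longrightarrow> sg \<in> JPol A \<Longrightarrow> stoch P sg"
proof -
  assume g: "is_game A beta P" and s: "sg \<in> JPol A"
  have "jact sg z \<in> joint_actions A" for z
    using s by (auto simp: jact_def joint_actions_def JPol_def Pol_def)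
  then show ?thesis using g by (auto simp: stoch_def is_game_def)
qed

lemma beta_abs: "is_game A beta P \<Longrightarrow> \<bar>beta i\<bar> < 1"
  by (auto simp: is_game_def) (metis abs_of_pos)

lemma Jc_bell:
  assumes g: "is_game A beta P" and s: "sg \<in> JPol A"
  shows "Jc beta c P i sg x = c i x (jact sg x) + beta i * (\<Sum>z\<in>UNIV. P x (jact sg x) z * Jc beta c P i sg z)"
  unfolding Jc_def
  by (rule bellman(2)[OF stoch_JPol[OF g s] beta_abs[OF g]])

lemma comp0:
  fixes w :: "'x::finite \<Rightarrow> real"
  assumes g: "is_game A beta P" and s: "sg \<in> JPol A"
    and h: "\<forall>x. w x \<le> beta i * (\<Sum>y\<in>UNIV. P x (jact sg x) y * w y)"
  shows "w x \<le> 0"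
proof -
  define m where "m = Max (range w)"
  have mx: "w y \<le> m" for y unfolding m_def by (rule Max_ge) auto
  have "m \<in> range w" unfolding m_def by (rule Max_in) auto
  then obtain x0 where x0: "w x0 = m" by auto
  have st: "stoch P sg" by (rule stoch_JPol[OF g s])
  have b: "0 < beta i" "beta i < 1" using g by (auto simp: is_game_def)
  have "(\<Sum>y\<in>UNIV. P x0 (jact sg x0) y * w y) \<le> (\<Sum>y\<in>UNIV. P x0 (jact sg x0) y * m)"
    using st mx by (intro sum_mono mult_left_mono) (auto simp: stoch_def)
  also have "\<dots> = m" using st by (simp add: stoch_def sum_distrib_right[symmetric])
  finally have "m \<le> beta i * m" using h x0 b
    by (metis dual_order.trans mult_left_mono less_imp_le)
  then have "m \<le> 0" using b
    by (metis mult_le_cancel_right1 not_le)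
  then show ?thesis using mx[of x] by simp
qed

lemma upper:
  assumes g: "is_game A beta P" and s: "sg \<in> JPol A"
    and h: "\<forall>x. c i x (jact sg x) + beta i * (\<Sum>y\<in>UNIV. P x (jact sg x) y * v y) \<le> v x"
  shows "Jc beta c P i sg x \<le> v x"
proof -
  have "(\<lambda>x. Jc beta c P i sg x - v x) x \<le> 0"
  proof (rule comp0[OF g s])
    show "\<forall>x. Jc beta c P i sg x - v x \<le> beta i * (\<Sum>y\<in>UNIV. P x (jact sg x) y * (Jc beta c P i sg y - v y))"
    proof
      fix x
      have "Jc beta c P i sg x - v x \<le> (c i x (jact sg x) + beta i * (\<Sum>z\<in>UNIV. P x (jact sg x) z * Jc beta c P i sg z))
          - (c i x (jact sg x) + beta i * (\<Sum>y\<in>UNIV. P x (jact sg x) y * v y))"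
        using Jc_bell[OF g s, of c i x] h[rule_format, of x] by linarith
      also have "\<dots> = beta i * (\<Sum>y\<in>UNIV. P x (jact sg x) y * (Jc beta c P i sg y - v y))"
        by (simp add: algebra_simps sum_subtractf)
      finally show "Jc beta c P i sg x - v x \<le> beta i * (\<Sum>y\<in>UNIV. P x (jact sg x) y * (Jc beta c P i sg y - v y))" .
    qed
  qed
  then show ?thesis by simp
qed

lemma lower:
  assumes g: "is_game A beta P" and s: "sg \<in> JPol A"
    and h: "\<forall>x. v x \<le> c i x (jact sg x) + beta i * (\<Sum>y\<in>UNIV. P x (jact sg x) y * v y)"
  shows "v x \<le> Jc beta c P i sg x"
proof -
  have "(\<lambda>x. v x - Jc beta c P i sg x) x \<le> 0"
  proof (rule comp0[OF g s])
    show "\<forall>x. v x - Jc beta c P i sg x \<le> beta i * (\<Sum>y\<in>UNIV. P x (jact sg x) y * (v y - Jc beta c P i sg y))"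
    proof
      fix x
      have "v x - Jc beta c P i sg x \<le> (c i x (jact sg x) + beta i * (\<Sum>y\<in>UNIV. P x (jact sg x) y * v y))
          - (c i x (jact sg x) + beta i * (\<Sum>z\<in>UNIV. P x (jact sg x) z * Jc beta c P i sg z))"
        using Jc_bell[OF g s, of c i x] h[rule_format, of x] by linarith
      also have "\<dots> = beta i * (\<Sum>y\<in>UNIV. P x (jact sg x) y * (v y - Jc beta c P i sg y))"
        by (simp add: algebra_simps sum_subtractf)
      finally show "v x - Jc beta c P i sg x \<le> beta i * (\<Sum>y\<in>UNIV. P x (jact sg x) y * (v y - Jc beta c P i sg y))" .
    qed
  qed
  then show ?thesis by simp
qed

lemma jact_upd: "jact (sg(i:=p)) x = (jact sg x)(i := p x)"
  by (auto simp: jact_def fun_eq_iff)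

lemma JPol_upd: "sg \<in> JPol A \<Longrightarrow> p \<in> Pol A i \<Longrightarrow> sg(i:=p) \<in> JPol A"
  by (auto simp: JPol_def)


lemma exists_best_reply:
  fixes A :: "'i::finite \<Rightarrow> 'a::finite set" and P :: "'x::finite \<Rightarrow> ('i \<Rightarrow> 'a) \<Rightarrow> 'x \<Rightarrow> real"
  assumes g: "is_game A beta P" and s: "sg \<in> JPol A"
  shows "\<exists>p. best_reply A beta c P i sg p"
proof -
  have fin: "finite (Pol A i :: ('x \<Rightarrow> 'a) set)" by (rule finite)
  have "((\<lambda>x. SOME a. a \<in> A i) :: 'x \<Rightarrow> 'a) \<in> Pol A i"
    using g by (auto simp: Pol_def is_game_def some_in_eq)
  then have ne: "(Pol A i :: ('x \<Rightarrow> 'a) set) \<noteq> {}" by auto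
  define S where "S q = (\<Sum>x\<in>UNIV. Jc beta c P i (sg(i:=q)) x)" for q
  define m where "m = Min (S ` Pol A i)"
  have "m \<in> S ` Pol A i" unfolding m_def using fin ne by (intro Min_in) auto
  then obtain p where p: "p \<in> Pol A i" "S p = m" by auto
  have pmin: "S p \<le> S q" if "q \<in> Pol A i" for q
    unfolding p(2) m_def using fin that by (intro Min_le) auto
  define J where "J = Jc beta c P i (sg(i:=p))"
  have sp: "sg(i:=p) \<in> JPol A" by (rule JPol_upd[OF s p(1)])
  have greedy: "J x \<le> c i x ((jact sg x)(i:=a)) + beta i * (\<Sum>y\<in>UNIV. P x ((jact sg x)(i:=a)) y * J y)"
    if a: "a \<in> A i" for x a
  proof (rule ccontr)
    assume nl: "\<not> ?thesis"
    define p' where "p' = p(x:=a)"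
    have p': "p' \<in> Pol A i" using p(1) a by (auto simp: Pol_def p'_def)
    have sp': "sg(i:=p') \<in> JPol A" by (rule JPol_upd[OF s p'])
    define J' where "J' = Jc beta c P i (sg(i:=p'))"
    have T: "\<forall>z. c i z (jact (sg(i:=p')) z) + beta i * (\<Sum>y\<in>UNIV. P z (jact (sg(i:=p')) z) y * J y) \<le> J z"
    proof
      fix z
      show "c i z (jact (sg(i:=p')) z) + beta i * (\<Sum>y\<in>UNIV. P z (jact (sg(i:=p')) z) y * J y) \<le> J z"
      proof (cases "z = x")
        case True then show ?thesis using nl by (simp add: jact_upd p'_def)
      next
        case False
        then have "jact (sg(i:=p')) z = jact (sg(i:=p)) z" by (simp add: jact_upd p'_def)
        then show ?thesis using Jc_bell[OF g sp, of c i z] unfolding J_def by simp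
      qed
    qed
    have le: "J' z \<le> J z" for z unfolding J'_def by (rule upper[OF g sp', where v=J and c=c and i=i, OF T])
    have "J' x = c i x (jact (sg(i:=p')) x) + beta i * (\<Sum>y\<in>UNIV. P x (jact (sg(i:=p')) x) y * J' y)"
      unfolding J'_def by (rule Jc_bell[OF g sp'])
    also have "\<dots> \<le> c i x (jact (sg(i:=p')) x) + beta i * (\<Sum>y\<in>UNIV. P x (jact (sg(i:=p')) x) y * J y)"
      using stoch_JPol[OF g sp'] g le
      by (auto simp: stoch_def is_game_def intro!: mult_left_mono sum_mono)
    also have "\<dots> < J x" using nl by (simp add: jact_upd p'_def)
    finally have "J' x < J x" .
    then have "S p' < S p" unfolding S_def using le
      by (intro sum_strict_mono_ex1) (auto simp: J_def J'_def)
    then show False using pmin[OF p'] by simp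
  qed
  have "best_reply A beta c P i sg p"
    unfolding best_reply_def
  proof (intro conjI p(1) ballI allI)
    fix q :: "'x \<Rightarrow> 'a" and x :: 'x assume q: "q \<in> Pol A i"
    have sq: "sg(i:=q) \<in> JPol A" by (rule JPol_upd[OF s q])
    show "Jc beta c P i (sg(i := p)) x \<le> Jc beta c P i (sg(i := q)) x"
      unfolding J_def[symmetric]
    proof (rule lower[OF g sq])
      show "\<forall>x. J x \<le> c i x (jact (sg(i := q)) x) + beta i * (\<Sum>y\<in>UNIV. P x (jact (sg(i := q)) x) y * J y)"
        using greedy q by (auto simp: jact_upd Pol_def)
    qed
  qed
  then show ?thesis by blast
qed


lemma partI:
  fixes A :: "'i::finite \<Rightarrow> 'a::finite set"
    and beta :: "'i \<Rightarrow> real"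
    and c :: "'i \<Rightarrow> 'x::finite \<Rightarrow> ('i \<Rightarrow> 'a) \<Rightarrow> real"
    and P :: "'x \<Rightarrow> ('i \<Rightarrow> 'a) \<Rightarrow> 'x \<Rightarrow> real"
  assumes g: "is_game A beta P" and s: "sg \<in> JPol A"
  shows "sg \<in> Peq A beta c P \<longleftrightarrow> min_cumber A beta c P {sg}"
proof
  assume eq: "sg \<in> Peq A beta c P"
  have "BRt A beta c P sg \<subseteq> {sg}"
  proof
    fix sg' assume b: "sg' \<in> BRt A beta c P sg"
    show "sg' \<in> {sg}"
    proof (rule ccontr)
      assume "sg' \<notin> {sg}"
      then obtain i where ne: "sg' i \<noteq> sg i" by auto
      then have sb: "strict_best_reply A beta c P i sg (sg' i)" using b by (auto simp: BRt_def)
      then obtain x where lt: "Jc beta c P i (sg(i := sg' i)) x < Jc beta c P i sg x"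
        and pol: "sg' i \<in> Pol A i"
        by (auto simp: strict_best_reply_def best_reply_def)
      have "best_reply A beta c P i sg (sg i)" using eq by (auto simp: Peq_def)
      then have "Jc beta c P i (sg(i := sg i)) x \<le> Jc beta c P i (sg(i := sg' i)) x"
        using pol by (auto simp: best_reply_def)
      then show False using lt by simp
    qed
  qed
  then have "cumber A beta c P {sg}" using s by (auto simp: cumber_def)
  moreover have "\<not> (\<exists>T'. T' \<subset> {sg} \<and> cumber A beta c P T')"
    by (auto simp: cumber_def)
  ultimately show "min_cumber A beta c P {sg}" by (simp add: min_cumber_def)
next
  assume mc: "min_cumber A beta c P {sg}"
  then have sub: "BRt A beta c P sg \<subseteq> {sg}" by (auto simp: min_cumber_def cumber_def)
  have "best_reply A beta c P i sg (sg i)" for i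
  proof (rule ccontr)
    assume nb: "\<not> best_reply A beta c P i sg (sg i)"
    obtain p where bp: "best_reply A beta c P i sg p" using exists_best_reply[OF g s] by blast
    have si: "sg i \<in> Pol A i" using s by (auto simp: JPol_def)
    then obtain q x where q: "q \<in> Pol A i" and lt: "Jc beta c P i (sg(i := q)) x < Jc beta c P i sg x"
      using nb by (auto simp: best_reply_def not_le)
    have "Jc beta c P i (sg(i := p)) x \<le> Jc beta c P i (sg(i := q)) x"
      using bp q by (auto simp: best_reply_def)
    then have sbr: "strict_best_reply A beta c P i sg p"
      using bp lt unfolding strict_best_reply_def by (meson le_less_trans)
    have pp: "p \<in> Pol A i" using bp by (auto simp: best_reply_def)
    have "sg(i := p) \<in> BRt A beta c P sg"
      using JPol_upd[OF s pp] sbr by (auto simp: BRt_def)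
    then have "sg(i:=p) = sg" using sub by auto
    then have "p = sg i" by (metis fun_upd_same)
    then show False using lt \<open>Jc beta c P i (sg(i := p)) x \<le> Jc beta c P i (sg(i := q)) x\<close> by simp
  qed
  then show "sg \<in> Peq A beta c P" using s by (auto simp: Peq_def)
qed

lemma rtrancl_path:
  assumes "(a, b) \<in> {(s, s'). s \<in> JPol A \<and> s' \<in> BRt_L A beta c P L s}\<^sup>*" and "a \<in> JPol A"
  shows "\<exists>ps. sbr_path A beta c P ps \<and> hd ps = a \<and> last ps = b"
  using assms
proof (induction rule: converse_rtrancl_induct)
  case base
  then show ?case by (intro exI[of _ "[b]"]) (auto simp: sbr_path_def)
next
  case (step y z)
  have yz: "y \<in> JPol A" "z \<in> BRt_L A beta c P L y" using step by auto
  have zJ: "z \<in> JPol A" using yz by (auto simp: BRt_L_def)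
  obtain ps where ps: "sbr_path A beta c P ps" "hd ps = z" "last ps = b" using step.IH zJ by blast
  show ?case
  proof (cases "z = y")
    case True then show ?thesis using ps by blast
  next
    case False
    have br: "z \<in> BRt A beta c P y" using yz(2) by (auto simp: BRt_L_def BRt_def)
    have kk: "(y # ps) ! Suc k \<noteq> (y # ps) ! k \<and> (y # ps) ! Suc k \<in> BRt A beta c P ((y # ps) ! k)"
      if k: "Suc k < length (y # ps)" for k
    proof (cases k)
      case 0
      have "ps ! 0 = z" using ps(1,2) by (auto simp: sbr_path_def hd_conv_nth)
      then show ?thesis using 0 False br by simp
    next
      case (Suc j)
      then show ?thesis using ps(1) k by (auto simp: sbr_path_def)
    qed
    have "sbr_path A beta c P (y # ps)"
      using ps(1) yz(1) kk unfolding sbr_path_def by auto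
    moreover have "last (y # ps) = b" using ps by (auto simp: sbr_path_def)
    ultimately show ?thesis by (intro exI[of _ "y # ps"]) simp
  qed
qed

lemma partII:
  fixes A :: "'i::finite \<Rightarrow> 'a::finite set"
    and beta :: "'i \<Rightarrow> real"
    and c :: "'i \<Rightarrow> 'x::finite \<Rightarrow> ('i \<Rightarrow> 'a) \<Rightarrow> real"
    and P :: "'x \<Rightarrow> ('i \<Rightarrow> 'a) \<Rightarrow> 'x \<Rightarrow> real"
    and L :: "'i \<Rightarrow> real"
  assumes s: "sg \<in> JPol A"
  shows "\<exists>ps. sbr_path A beta c P ps \<and> hd ps = sg \<and> last ps \<in> Pcumber_L A beta c P L"
proof -
  define E where "E = {(s, s'). s \<in> JPol A \<and> s' \<in> BRt_L A beta c P L s}"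
  define R where "R = {s'. (sg, s') \<in> E\<^sup>*}"
  have RJ: "R \<subseteq> JPol A"
  proof
    fix t assume "t \<in> R"
    then have "(sg, t) \<in> E\<^sup>*" by (simp add: R_def)
    then show "t \<in> JPol A" using s
      by (induction rule: rtrancl_induct) (auto simp: E_def BRt_L_def)
  qed
  have "L_cumber A beta c P L R"
    unfolding L_cumber_def
  proof (intro conjI ballI)
    show "R \<noteq> {}" by (auto simp: R_def)
    show "R \<subseteq> JPol A" by (rule RJ)
  next
    fix t assume t: "t \<in> R"
    show "BRt_L A beta c P L t \<subseteq> R"
    proof
      fix u assume "u \<in> BRt_L A beta c P L t"
      then have "(t, u) \<in> E" using RJ t by (auto simp: E_def)
      then show "u \<in> R" using t by (auto simp: R_def)
    qed
  qed
  then obtain T where T: "T \<subseteq> R \<and> L_cumber A beta c P L T"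
    and Tm: "\<And>T'. T' \<subseteq> R \<and> L_cumber A beta c P L T' \<Longrightarrow> card T \<le> card T'"
    using ex_has_least_nat[of "\<lambda>T. T \<subseteq> R \<and> L_cumber A beta c P L T" R card] by blast
  have "min_L_cumber A beta c P L T"
    unfolding min_L_cumber_def
  proof (intro conjI notI)
    show "L_cumber A beta c P L T" using T by simp
  next
    assume "\<exists>T'. T' \<subset> T \<and> L_cumber A beta c P L T'"
    then obtain T' where T': "T' \<subset> T" "L_cumber A beta c P L T'" by blast
    have "card T' < card T" using T'(1) by (intro psubset_card_mono) auto
    moreover have "card T \<le> card T'" using Tm[of T'] T T' by auto
    ultimately show False by simp
  qed
  then have TP: "T \<subseteq> Pcumber_L A beta c P L" by (auto simp: Pcumber_L_def)
  obtain t where t: "t \<in> T" using T by (auto simp: L_cumber_def)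
  then have "(sg, t) \<in> E\<^sup>*" using T by (auto simp: R_def)
  then obtain ps where "sbr_path A beta c P ps" "hd ps = sg" "last ps = t"
    using rtrancl_path[of sg t A beta c P L] s unfolding E_def by blast
  then show ?thesis using t TP by blast
qed

theorem mainTheorem6:
  fixes A :: "'i::finite \<Rightarrow> 'a::finite set"
    and beta :: "'i \<Rightarrow> real"
    and c :: "'i \<Rightarrow> 'x::finite \<Rightarrow> ('i \<Rightarrow> 'a) \<Rightarrow> real"
    and P :: "'x \<Rightarrow> ('i \<Rightarrow> 'a) \<Rightarrow> 'x \<Rightarrow> real"
    and L :: "'i \<Rightarrow> real"
  assumes "is_game A beta P"
  shows "(\<forall>sg\<in>JPol A. sg \<in> Peq A beta c P \<longleftrightarrow> min_cumber A beta c P {sg})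
       \<and> (\<forall>sg\<in>JPol A - Pcumber_L A beta c P L.
            \<exists>ps. sbr_path A beta c P ps \<and> hd ps = sg \<and> last ps \<in> Pcumber_L A beta c P L)"
  using partI[OF assms] partII[of _ A beta c P L] by blast

end
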